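(* Let $d\ge1$, $T>0$, let $A\in\mathbb{R}^{d\times d}$ be symmetric positive semi-definite, let $V:\mathbb{R}^d\to\mathbb{R}$ be twice continuously differentiable, and let $U(y)=\frac12 y^{\intercal}Ay+V(y)$. Let $G:\mathbb{R}^d\to\mathbb{R}^{d\times d}$ be continuous with $G(y)$ symmetric and $v^{\intercal}G(y)v\ge v^{\intercal}\Gamma v>0$ for all $y$ and all $v\neq0$, for a fixed symmetric positive definite matrix $\Gamma$. Consider the gradient system $G(y(t))\dot y(t)=-\nabla U(y(t))$, $y(0)=y_0\in\mathbb{R}^d$. Let $\varphi_0,\ldots,\varphi_{r-1}$ be sufficiently smooth, linearly independent real functions on $[0,T]$, let $0<h\le T$, and let $X_h,Y_h,\mathcal{P}_h$ be as described in the context. Suppose $\tilde u\in X_h$ satisfies $\tilde u(0)=y_0$ and $$G(\tilde u(\tau))\,\tilde u'(\tau)+A\tilde u(\tau)=-\mathcal{P}_h\big(\nabla V(\tilde u(\cdot))\big)(\tau),\qquad\tau\in[0,1],$$ and set $y_1=\tilde u(1)$ (the EFFED method). Then $U(y_1)\le U(y_0)$.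
   Context: Function spaces: $Y_h$ is the set of $\mathbb{R}^d$-valued functions on $[0,1]$ of the form $\sum_{i=0}^{r-1}\tilde\varphi_i(\tau)W_i$ with $W_i\in\mathbb{R}^d$, where $\tilde\varphi_i(\tau)=\varphi_i(\tau h)$; $X_h$ is the set of $\mathbb{R}^d$-valued functions on $[0,1]$ of the form $W+\sum_{i=0}^{r-1}\big(\int_0^{\tau h}\varphi_i(s)\,ds\big)W_i$ with $W,W_i\in\mathbb{R}^d$. Equivalently $\tilde u(\tau)=u(\tau h)$ for $u$ in $X=\mathrm{span}\{1,\int_0^t\varphi_0,\ldots,\int_0^t\varphi_{r-1}\}$, and $\tilde u'(\tau)$ means $u'(\tau h)=\frac1h\frac{d}{d\tau}\tilde u(\tau)$, which lies in $Y_h$. Projection: for continuous $\tilde w:[0,1]\to\mathbb{R}^d$, $\mathcal{P}_h\tilde w$ is the unique element of $Y_h$ with $\int_0^1\tilde v(\tau)\cdot\mathcal{P}_h\tilde w(\tau)\,d\tau=\int_0^1\tilde v(\tau)\cdot\tilde w(\tau)\,d\tau$ for all $\tilde v\in Y_h$, where $\cdot$ denotes entrywise multiplication (so each component of $\mathcal{P}_h\tilde w$ is the $L^2(0,1)$-orthogonal projection of the corresponding component of $\tilde w$ onto $\mathrm{span}\{\tilde\varphi_0,\ldots,\tilde\varphi_{r-1}\}$). *)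

theory Defs
  imports "HOL-Analysis.Analysis"
begin

definition in_Yh :: "(nat \<Rightarrow> real \<Rightarrow> real) \<Rightarrow> nat \<Rightarrow> real \<Rightarrow> (real \<Rightarrow> real^'n) \<Rightarrow> bool" where
  "in_Yh phi r h v \<longleftrightarrow>
     (\<exists>Ws :: nat \<Rightarrow> real^'n. \<forall>\<tau>\<in>{0..1}. v \<tau> = (\<Sum>i<r. phi i (\<tau> * h) *\<^sub>R Ws i))"

text \<open>p is the projection P_h w: p in Y_h and the (entrywise) Galerkin orthogonality holds.\<close>
definition is_proj_Yh :: "(nat \<Rightarrow> real \<Rightarrow> real) \<Rightarrow> nat \<Rightarrow> real \<Rightarrow> (real \<Rightarrow> real^'n) \<Rightarrow> (real \<Rightarrow> real^'n) \<Rightarrow> bool" where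
  "is_proj_Yh phi r h w p \<longleftrightarrow> in_Yh phi r h p \<and>
     (\<forall>v. in_Yh phi r h v \<longrightarrow>
        integral {0..1} (\<lambda>\<tau>. v \<tau> * p \<tau>) = integral {0..1} (\<lambda>\<tau>. v \<tau> * w \<tau>))"

text \<open>The projection P_h w, evaluated at tau in [0,1] (unique value on [0,1]).\<close>
definition Ph :: "(nat \<Rightarrow> real \<Rightarrow> real) \<Rightarrow> nat \<Rightarrow> real \<Rightarrow> (real \<Rightarrow> real^'n) \<Rightarrow> real \<Rightarrow> real^'n" where
  "Ph phi r h w \<tau> = (THE y. \<exists>p. is_proj_Yh phi r h w p \<and> p \<tau> = y)"

end

theory Submission imports Defs begin

lemma ip_integrable:
  fixes a b :: "real \<Rightarrow> real"
  assumes "continuous_on {0..1} a" "continuous_on {0..1} b"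
  shows "(\<lambda>t. a t * b t) integrable_on {0..1}"
  by (intro integrable_continuous_interval continuous_intros assms)

lemma ip_comm: "integral S (\<lambda>t. (a::real\<Rightarrow>real) t * b t) = integral S (\<lambda>t. b t * a t)"
  by (simp add: mult.commute)

lemma ip_lin:
  fixes a b :: "real \<Rightarrow> real" and c :: "nat \<Rightarrow> real \<Rightarrow> real"
  assumes a: "continuous_on {0..1} a" and b: "continuous_on {0..1} b"
    and c: "\<And>i. i<n \<Longrightarrow> continuous_on {0..1} (c i)"
  shows "integral {0..1} (\<lambda>t. a t * (b t - (\<Sum>i<n. s i * c i t))) =
     integral {0..1} (\<lambda>t. a t * b t) - (\<Sum>i<n. s i * integral {0..1} (\<lambda>t. a t * c i t))"
proof -
  have "integral {0..1} (\<lambda>t. a t * (b t - (\<Sum>i<n. s i * c i t))) =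
        integral {0..1} (\<lambda>t. a t * b t - (\<Sum>i<n. s i * (a t * c i t)))"
    by (rule integral_cong) (simp add: right_diff_distrib sum_distrib_left mult.left_commute)
  also have "\<dots> = integral {0..1} (\<lambda>t. a t * b t) - integral {0..1} (\<lambda>t. (\<Sum>i<n. s i * (a t * c i t)))"
    by (rule integral_diff) (auto intro!: integrable_continuous_interval continuous_intros a b c)
  also have "integral {0..1} (\<lambda>t. (\<Sum>i<n. s i * (a t * c i t))) = (\<Sum>i<n. integral {0..1} (\<lambda>t. s i * (a t * c i t)))"
    by (rule integral_sum) (auto intro!: integrable_continuous_interval continuous_intros a b c)
  also have "\<dots> = (\<Sum>i<n. s i * integral {0..1} (\<lambda>t. a t * c i t))"
    by (rule sum.cong) (auto intro!: integral_mult_right)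
  finally show ?thesis .
qed

lemma ip_lin2:
  fixes a b c :: "real \<Rightarrow> real"
  assumes a: "continuous_on {0..1} a" and b: "continuous_on {0..1} b"
    and c: "continuous_on {0..1} c"
  shows "integral {0..1} (\<lambda>t. a t * (b t - s * c t)) =
     integral {0..1} (\<lambda>t. a t * b t) - s * integral {0..1} (\<lambda>t. a t * c t)"
  using ip_lin[of a b 1 "\<lambda>_. c" "\<lambda>_. s"] a b c by simp

lemma gram_exists:
  fixes f :: "nat \<Rightarrow> real \<Rightarrow> real" and w :: "real \<Rightarrow> real"
  assumes "\<And>i. i<n \<Longrightarrow> continuous_on {0..1} (f i)" and "continuous_on {0..1} w"
  shows "\<exists>c. \<forall>j<n. integral {0..1} (\<lambda>t. f j t * (w t - (\<Sum>i<n. c i * f i t))) = 0"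
  using assms
proof (induction n arbitrary: w)
  case 0
  then show ?case by simp
next
  case (Suc n)
  have f: "\<And>i. i<n \<Longrightarrow> continuous_on {0..1} (f i)" and fn: "continuous_on {0..1} (f n)"
    using Suc.prems by auto
  obtain c where c: "\<forall>j<n. integral {0..1} (\<lambda>t. f j t * (w t - (\<Sum>i<n. c i * f i t))) = 0"
    using Suc.IH[OF f Suc.prems(2)] by blast
  obtain d where d: "\<forall>j<n. integral {0..1} (\<lambda>t. f j t * (f n t - (\<Sum>i<n. d i * f i t))) = 0"
    using Suc.IH[OF f fn] by blast
  define e where "e t = w t - (\<Sum>i<n. c i * f i t)" for t
  define g where "g t = f n t - (\<Sum>i<n. d i * f i t)" for t
  have ce: "continuous_on {0..1} e" unfolding e_def
    by (intro continuous_intros Suc.prems(2) f) auto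
  have cg: "continuous_on {0..1} g" unfolding g_def
    by (intro continuous_intros fn f) auto
  have E: "\<And>j. j<n \<Longrightarrow> integral {0..1} (\<lambda>t. f j t * e t) = 0" using c unfolding e_def by auto
  have Gf: "\<And>j. j<n \<Longrightarrow> integral {0..1} (\<lambda>t. f j t * g t) = 0" using d unfolding g_def by auto
  have gg: "integral {0..1} (\<lambda>t. g t * g t) = integral {0..1} (\<lambda>t. f n t * g t)"
  proof -
    have "integral {0..1} (\<lambda>t. g t * g t) = integral {0..1} (\<lambda>t. g t * (f n t - (\<Sum>i<n. d i * f i t)))"
      by (simp add: g_def)
    also have "\<dots> = integral {0..1} (\<lambda>t. g t * f n t) - (\<Sum>i<n. d i * integral {0..1} (\<lambda>t. g t * f i t))"
      by (rule ip_lin[OF cg fn f])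
    also have "(\<Sum>i<n. d i * integral {0..1} (\<lambda>t. g t * f i t)) = 0"
      using Gf ip_comm[of "{0..1}" g] by (intro sum.neutral) auto
    finally show ?thesis using ip_comm[of _ g "f n"] by simp
  qed
  have ge: "integral {0..1} (\<lambda>t. g t * e t) = integral {0..1} (\<lambda>t. f n t * e t)"
  proof -
    have "integral {0..1} (\<lambda>t. g t * e t) = integral {0..1} (\<lambda>t. e t * (f n t - (\<Sum>i<n. d i * f i t)))"
      by (simp add: g_def mult.commute)
    also have "\<dots> = integral {0..1} (\<lambda>t. e t * f n t) - (\<Sum>i<n. d i * integral {0..1} (\<lambda>t. e t * f i t))"
      by (rule ip_lin[OF ce fn f])
    also have "(\<Sum>i<n. d i * integral {0..1} (\<lambda>t. e t * f i t)) = 0"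
      using E ip_comm[of "{0..1}" e] by (intro sum.neutral) auto
    finally show ?thesis using ip_comm[of _ e "f n"] by simp
  qed
  have ge0: "integral {0..1} (\<lambda>t. g t * e t) = 0" if "integral {0..1} (\<lambda>t. g t * g t) = 0"
  proof -
    have cgg: "continuous_on {0..1} (\<lambda>t. g t * g t)" using cg by (intro continuous_intros)
    have "\<forall>t\<in>{0..1}. g t * g t = 0"
      using that integral_eq_0_iff[OF cgg] by simp
    then have "\<And>t. t \<in> {0..1} \<Longrightarrow> g t * e t = 0" by auto
    then have "((\<lambda>t. g t * e t) has_integral 0) {0..1}" by (rule has_integral_is_0)
    then show ?thesis by (rule integral_unique)
  qed
  define \<alpha> where "\<alpha> = integral {0..1} (\<lambda>t. g t * e t) / integral {0..1} (\<lambda>t. g t * g t)"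
  have key: "integral {0..1} (\<lambda>t. g t * e t) - \<alpha> * integral {0..1} (\<lambda>t. g t * g t) = 0"
    using ge0 unfolding \<alpha>_def by (cases "integral {0..1} (\<lambda>t. g t * g t) = 0") auto
  define c' where "c' i = (if i < n then c i - \<alpha> * d i else \<alpha>)" for i
  have res: "w t - (\<Sum>i<Suc n. c' i * f i t) = e t - \<alpha> * g t" for t
  proof -
    have "(\<Sum>i<n. c' i * f i t) = (\<Sum>i<n. c i * f i t) - \<alpha> * (\<Sum>i<n. d i * f i t)"
      by (simp add: c'_def sum_distrib_left left_diff_distrib sum_subtractf mult.assoc)
    then show ?thesis by (simp add: e_def g_def c'_def algebra_simps)
  qed
  show ?case
  proof (intro exI[of _ c'] allI impI)
    fix j assume j: "j < Suc n"
    have "integral {0..1} (\<lambda>t. f j t * (w t - (\<Sum>i<Suc n. c' i * f i t)))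
        = integral {0..1} (\<lambda>t. f j t * (e t - \<alpha> * g t))" by (simp only: res)
    also have "\<dots> = integral {0..1} (\<lambda>t. f j t * e t) - \<alpha> * integral {0..1} (\<lambda>t. f j t * g t)"
      using j f fn by (intro ip_lin2 ce cg) (auto simp: less_Suc_eq)
    also have "\<dots> = 0"
    proof (cases "j < n")
      case True then show ?thesis using E Gf by simp
    next
      case False then have "j = n" using j by simp
      then show ?thesis using key ge gg by simp
    qed
    finally show "integral {0..1} (\<lambda>t. f j t * (w t - (\<Sum>i<Suc n. c' i * f i t))) = 0" .
  qed
qed


lemma cont_ph:
  fixes f :: "real \<Rightarrow> 'a::topological_space" and h T :: real
  assumes "continuous_on {0..T} f" "0 \<le> h" "h \<le> T"
  shows "continuous_on {0..1} (\<lambda>t. f (t*h))"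
proof (rule continuous_on_compose2[OF assms(1)])
  show "continuous_on {0..1} (\<lambda>t::real. t*h)" by (intro continuous_intros)
  show "(\<lambda>t. t*h) ` {0..1} \<subseteq> {0..T}"
  proof
    fix x assume "x \<in> (\<lambda>t. t*h) ` {0..1::real}"
    then obtain t where t: "t \<in> {0..1}" "x = t*h" by auto
    have "t*h \<le> 1*h" using t assms by (intro mult_right_mono) auto
    then show "x \<in> {0..T}" using t assms by auto
  qed
qed

lemma cont_Y:
  fixes T h :: real
  assumes "\<forall>i<r. continuous_on {0..T} (phi i)" "0 \<le> h" "h \<le> T"
  shows "continuous_on {0..1} (\<lambda>t. \<Sum>i<r. phi i (t*h) *\<^sub>R (Ws i :: real^'n))"
  using assms by (intro continuous_intros cont_ph[where T=T]) auto

lemma cont_vmult: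
  fixes X Y :: "real \<Rightarrow> real^'n"
  assumes "continuous_on S X" "continuous_on S Y"
  shows "continuous_on S (\<lambda>t. X t * Y t)"
proof -
  have "(\<lambda>t. X t * Y t) = (\<lambda>t. \<chi> k. X t $ k * Y t $ k)" by (simp add: vec_eq_iff fun_eq_iff)
  moreover have "continuous_on S (\<lambda>t. \<chi> k. X t $ k * Y t $ k)"
    by (intro continuous_on_vec_lambda continuous_intros assms)
  ultimately show ?thesis by metis
qed

lemma integral_vmult_comp:
  fixes X Y :: "real \<Rightarrow> real^'n"
  assumes "continuous_on {0..1} X" "continuous_on {0..1} Y"
  shows "integral {0..1} (\<lambda>t. X t * Y t) $ k = integral {0..1} (\<lambda>t. X t $ k * Y t $ k)"
proof -
  have "(\<lambda>t. X t * Y t) integrable_on {0..1}"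
    by (intro integrable_continuous_interval cont_vmult assms)
  from integral_component_eq_cart[OF this, of k] show ?thesis by simp
qed

lemma sum_comp: "(\<Sum>i<r. (a i::real) *\<^sub>R (W i :: real^'n)) $ k = (\<Sum>i<r. a i * W i $ k)"
  by (simp add: sum_component)

lemma proj_unique:
  fixes w p1 p2 :: "real \<Rightarrow> real^'n"
  assumes phi: "\<forall>i<r. continuous_on {0..T} (phi i)" and h: "0 \<le> h" "h \<le> T"
    and p1: "is_proj_Yh phi r h w p1" and p2: "is_proj_Yh phi r h w p2"
    and t: "\<tau> \<in> {0..1}"
  shows "p1 \<tau> = p2 \<tau>"
proof -
  obtain W1 where W1: "\<forall>\<tau>\<in>{0..1}. p1 \<tau> = (\<Sum>i<r. phi i (\<tau> * h) *\<^sub>R W1 i)"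
    using p1 unfolding is_proj_Yh_def in_Yh_def by blast
  obtain W2 where W2: "\<forall>\<tau>\<in>{0..1}. p2 \<tau> = (\<Sum>i<r. phi i (\<tau> * h) *\<^sub>R W2 i)"
    using p2 unfolding is_proj_Yh_def in_Yh_def by blast
  define q1 where "q1 t = (\<Sum>i<r. phi i (t * h) *\<^sub>R W1 i)" for t
  define q2 where "q2 t = (\<Sum>i<r. phi i (t * h) *\<^sub>R W2 i)" for t
  define v where "v t = q1 t - q2 t" for t
  have cq1: "continuous_on {0..1} q1" unfolding q1_def using phi h by (rule cont_Y)
  have cq2: "continuous_on {0..1} q2" unfolding q2_def using phi h by (rule cont_Y)
  have cv: "continuous_on {0..1} v" unfolding v_def using cq1 cq2 by (intro continuous_intros)
  have vY: "in_Yh phi r h v"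
    unfolding in_Yh_def
    by (rule exI[of _ "\<lambda>i. W1 i - W2 i"]) (simp add: v_def q1_def q2_def scaleR_diff_right sum_subtractf)
  have e1: "integral {0..1} (\<lambda>\<tau>. v \<tau> * p1 \<tau>) = integral {0..1} (\<lambda>\<tau>. v \<tau> * w \<tau>)"
    using p1 vY unfolding is_proj_Yh_def by blast
  have e2: "integral {0..1} (\<lambda>\<tau>. v \<tau> * p2 \<tau>) = integral {0..1} (\<lambda>\<tau>. v \<tau> * w \<tau>)"
    using p2 vY unfolding is_proj_Yh_def by blast
  have i1: "integral {0..1} (\<lambda>\<tau>. v \<tau> * p1 \<tau>) = integral {0..1} (\<lambda>\<tau>. v \<tau> * q1 \<tau>)"
    by (rule integral_cong) (simp add: W1 q1_def)
  have i2: "integral {0..1} (\<lambda>\<tau>. v \<tau> * p2 \<tau>) = integral {0..1} (\<lambda>\<tau>. v \<tau> * q2 \<tau>)"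
    by (rule integral_cong) (simp add: W2 q2_def)
  have vk: "v \<tau> $ k = 0" for k
  proof -
    have "integral {0..1} (\<lambda>t. v t $ k * q1 t $ k) = integral {0..1} (\<lambda>t. v t $ k * q2 t $ k)"
      using e1 e2 i1 i2 integral_vmult_comp[OF cv cq1, of k] integral_vmult_comp[OF cv cq2, of k] by simp
    moreover have "integral {0..1} (\<lambda>t. v t $ k * v t $ k) =
       integral {0..1} (\<lambda>t. v t $ k * q1 t $ k) - integral {0..1} (\<lambda>t. v t $ k * q2 t $ k)"
    proof -
      have "integral {0..1} (\<lambda>t. v t $ k * v t $ k) = integral {0..1} (\<lambda>t. v t $ k * q1 t $ k - v t $ k * q2 t $ k)"
        by (simp add: v_def right_diff_distrib)
      also have "\<dots> = integral {0..1} (\<lambda>t. v t $ k * q1 t $ k) - integral {0..1} (\<lambda>t. v t $ k * q2 t $ k)"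
        by (rule integral_diff) (auto intro!: integrable_continuous_interval continuous_intros cv cq1 cq2)
      finally show ?thesis .
    qed
    ultimately have z: "integral {0..1} (\<lambda>t. v t $ k * v t $ k) = 0" by simp
    have cvv: "continuous_on {0..1} (\<lambda>t. v t $ k * v t $ k)" using cv by (intro continuous_intros)
    have "\<forall>t\<in>{0..1}. v t $ k * v t $ k = 0" using z integral_eq_0_iff[OF cvv] by simp
    then show ?thesis using t by auto
  qed
  have "p1 \<tau> = q1 \<tau>" "p2 \<tau> = q2 \<tau>" using W1 W2 t by (auto simp: q1_def q2_def)
  then show ?thesis using vk by (simp add: vec_eq_iff v_def)
qed

lemma ip_sum_left:
  fixes f :: "nat \<Rightarrow> real \<Rightarrow> real" and b :: "real \<Rightarrow> real"
  assumes f: "\<And>i. i<n \<Longrightarrow> continuous_on {0..1} (f i)" and b: "continuous_on {0..1} b"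
  shows "integral {0..1} (\<lambda>t. (\<Sum>i<n. a i * f i t) * b t) = (\<Sum>i<n. a i * integral {0..1} (\<lambda>t. f i t * b t))"
proof -
  have "integral {0..1} (\<lambda>t. (\<Sum>i<n. a i * f i t) * b t) = integral {0..1} (\<lambda>t. (\<Sum>i<n. a i * (f i t * b t)))"
    by (simp add: sum_distrib_right mult.assoc)
  also have "\<dots> = (\<Sum>i<n. integral {0..1} (\<lambda>t. a i * (f i t * b t)))"
    by (rule integral_sum) (auto intro!: integrable_continuous_interval continuous_intros f b)
  also have "\<dots> = (\<Sum>i<n. a i * integral {0..1} (\<lambda>t. f i t * b t))"
    by (rule sum.cong) (auto intro!: integral_mult_right)
  finally show ?thesis .
qed

lemma proj_exists:
  fixes w :: "real \<Rightarrow> real^'n"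
  assumes phi: "\<forall>i<r. continuous_on {0..T} (phi i)" and h: "0 \<le> h" "h \<le> T"
    and w: "continuous_on {0..1} w"
  shows "\<exists>Ws. is_proj_Yh phi r h w (\<lambda>t. \<Sum>i<r. phi i (t*h) *\<^sub>R Ws i)"
proof -
  have fc: "\<And>i. i<r \<Longrightarrow> continuous_on {0..1} (\<lambda>t. phi i (t*h))"
    using phi h by (intro cont_ph[where T=T]) auto
  have wk: "continuous_on {0..1} (\<lambda>t. w t $ k)" for k using w by (intro continuous_intros)
  have "\<forall>k. \<exists>c. \<forall>j<r. integral {0..1} (\<lambda>t. phi j (t*h) * (w t $ k - (\<Sum>i<r. c i * phi i (t*h)))) = 0"
    using gram_exists[of r "\<lambda>i t. phi i (t*h)", OF fc wk] by blast
  then have "\<exists>C. \<forall>k. \<forall>j<r. integral {0..1} (\<lambda>t. phi j (t*h) * (w t $ k - (\<Sum>i<r. C k i * phi i (t*h)))) = 0"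
    by (rule choice)
  then obtain C where C: "\<And>k j. j<r \<Longrightarrow> integral {0..1} (\<lambda>t. phi j (t*h) * (w t $ k - (\<Sum>i<r. C k i * phi i (t*h)))) = 0"
    by blast
  define Ws where "Ws i = (\<chi> k. C k i)" for i
  define p where "p t = (\<Sum>i<r. phi i (t*h) *\<^sub>R Ws i)" for t
  have cp: "continuous_on {0..1} p" unfolding p_def using phi h by (rule cont_Y)
  have pk: "p t $ k = (\<Sum>i<r. C k i * phi i (t*h))" for t k
    by (simp add: p_def sum_comp Ws_def mult.commute)
  have "is_proj_Yh phi r h w p"
    unfolding is_proj_Yh_def
  proof (intro conjI allI impI)
    show "in_Yh phi r h p" unfolding in_Yh_def p_def by blast
    fix v :: "real \<Rightarrow> real^'n" assume "in_Yh phi r h v"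
    then obtain Vs where Vs: "\<forall>\<tau>\<in>{0..1}. v \<tau> = (\<Sum>i<r. phi i (\<tau> * h) *\<^sub>R Vs i)"
      unfolding in_Yh_def by blast
    define q where "q t = (\<Sum>i<r. phi i (t * h) *\<^sub>R Vs i)" for t
    have cq: "continuous_on {0..1} q" unfolding q_def using phi h by (rule cont_Y)
    have "integral {0..1} (\<lambda>\<tau>. v \<tau> * p \<tau>) = integral {0..1} (\<lambda>\<tau>. q \<tau> * p \<tau>)"
      by (rule integral_cong) (simp add: Vs q_def)
    moreover have "integral {0..1} (\<lambda>\<tau>. v \<tau> * w \<tau>) = integral {0..1} (\<lambda>\<tau>. q \<tau> * w \<tau>)"
      by (rule integral_cong) (simp add: Vs q_def)
    moreover have "integral {0..1} (\<lambda>\<tau>. q \<tau> * p \<tau>) = integral {0..1} (\<lambda>\<tau>. q \<tau> * w \<tau>)"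
    proof (subst vec_eq_iff, intro allI)
      fix k
      have qk: "q t $ k = (\<Sum>i<r. Vs i $ k * phi i (t*h))" for t
        by (simp add: q_def sum_comp mult.commute)
      have "integral {0..1} (\<lambda>t. q t $ k * w t $ k) - integral {0..1} (\<lambda>t. q t $ k * p t $ k)
          = integral {0..1} (\<lambda>t. q t $ k * (w t $ k - p t $ k))"
        by (subst integral_diff[symmetric])
           (auto intro!: integrable_continuous_interval continuous_intros cq cp w simp: right_diff_distrib)
      also have "\<dots> = integral {0..1} (\<lambda>t. (\<Sum>i<r. Vs i $ k * phi i (t*h)) * (w t $ k - (\<Sum>i<r. C k i * phi i (t*h))))"
        by (simp add: qk pk)
      also have "\<dots> = (\<Sum>i<r. Vs i $ k * integral {0..1} (\<lambda>t. phi i (t*h) * (w t $ k - (\<Sum>i<r. C k i * phi i (t*h)))))"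
        by (rule ip_sum_left[OF fc]) (auto intro!: continuous_intros fc wk)
      also have "\<dots> = 0" using C by simp
      finally show "integral {0..1} (\<lambda>\<tau>. q \<tau> * p \<tau>) $ k = integral {0..1} (\<lambda>\<tau>. q \<tau> * w \<tau>) $ k"
        using integral_vmult_comp[OF cq cp, of k] integral_vmult_comp[OF cq w, of k] by simp
    qed
    ultimately show "integral {0..1} (\<lambda>\<tau>. v \<tau> * p \<tau>) = integral {0..1} (\<lambda>\<tau>. v \<tau> * w \<tau>)" by simp
  qed
  then show ?thesis unfolding p_def by blast
qed

lemma Ph_eq:
  fixes w p :: "real \<Rightarrow> real^'n"
  assumes phi: "\<forall>i<r. continuous_on {0..T} (phi i)" and h: "0 \<le> h" "h \<le> T"
    and p: "is_proj_Yh phi r h w p" and t: "\<tau> \<in> {0..1}"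
  shows "Ph phi r h w \<tau> = p \<tau>"
  unfolding Ph_def
proof (rule the_equality)
  show "\<exists>p'. is_proj_Yh phi r h w p' \<and> p' \<tau> = p \<tau>" using p by blast
  fix y assume "\<exists>p'. is_proj_Yh phi r h w p' \<and> p' \<tau> = y"
  then obtain p' where "is_proj_Yh phi r h w p'" "p' \<tau> = y" by blast
  then show "y = p \<tau>" using proj_unique[OF phi h _ p t] by metis
qed


lemma integral_inner_vmult:
  fixes X Y :: "real \<Rightarrow> real^'n"
  assumes "continuous_on {0..1} X" "continuous_on {0..1} Y"
  shows "integral {0..1} (\<lambda>t. X t \<bullet> Y t) = (\<Sum>k\<in>UNIV. integral {0..1} (\<lambda>t. X t * Y t) $ k)"
proof -
  have "integral {0..1} (\<lambda>t. X t \<bullet> Y t) = integral {0..1} (\<lambda>t. \<Sum>k\<in>UNIV. X t $ k * Y t $ k)"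
    by (simp add: inner_vec_def)
  also have "\<dots> = (\<Sum>k\<in>UNIV. integral {0..1} (\<lambda>t. X t $ k * Y t $ k))"
    by (rule integral_sum) (auto intro!: integrable_continuous_interval continuous_intros assms)
  also have "\<dots> = (\<Sum>k\<in>UNIV. integral {0..1} (\<lambda>t. X t * Y t) $ k)"
    using integral_vmult_comp[OF assms] by simp
  finally show ?thesis .
qed

lemma sym_inner:
  fixes A :: "real^'n^'n"
  assumes "transpose A = A"
  shows "y \<bullet> (A *v z) = (A *v y) \<bullet> z"
proof -
  have "y \<bullet> (A *v z) = (y v* A) \<bullet> z" by (simp add: dot_lmul_matrix)
  also have "y v* A = transpose A *v y" by simp
  finally show ?thesis using assms by simp
qed

theorem theorem3p2:
  fixes A \<Gamma> :: "real^'n^'n"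
    and V :: "real^'n \<Rightarrow> real"
    and gradV :: "real^'n \<Rightarrow> real^'n"
    and G :: "real^'n \<Rightarrow> real^'n^'n"
    and phi :: "nat \<Rightarrow> real \<Rightarrow> real"
    and r :: nat
    and T h :: real
    and y0 W :: "real^'n"
    and Ws :: "nat \<Rightarrow> real^'n"
    and U :: "real^'n \<Rightarrow> real"
    and u u' :: "real \<Rightarrow> real^'n"
  assumes T_pos: "T > 0"
    and A_sym: "transpose A = A"
    and A_psd: "\<forall>v. 0 \<le> v \<bullet> (A *v v)"
    and V_grad: "\<forall>y. (V has_derivative (\<lambda>z. gradV y \<bullet> z)) (at y)"
    and V_C2: "\<exists>D :: real^'n \<Rightarrow> ((real^'n) \<Rightarrow>\<^sub>L (real^'n)).
                 (\<forall>y. (gradV has_derivative blinfun_apply (D y)) (at y)) \<and> continuous_on UNIV D"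
    and U_def: "\<forall>y. U y = 1/2 * (y \<bullet> (A *v y)) + V y"
    and G_cont: "continuous_on UNIV G"
    and G_sym: "\<forall>y. transpose (G y) = G y"
    and Gamma_sym: "transpose \<Gamma> = \<Gamma>"
    and Gamma_pd: "\<forall>v. v \<noteq> 0 \<longrightarrow> 0 < v \<bullet> (\<Gamma> *v v)"
    and G_bound: "\<forall>y v. v \<noteq> 0 \<longrightarrow> v \<bullet> (\<Gamma> *v v) \<le> v \<bullet> (G y *v v)"
    and phi_cont: "\<forall>i<r. continuous_on {0..T} (phi i)"
    and phi_indep: "\<forall>c :: nat \<Rightarrow> real. (\<forall>t\<in>{0..T}. (\<Sum>i<r. c i * phi i t) = 0) \<longrightarrow> (\<forall>i<r. c i = 0)"
    and h_pos: "0 < h" and h_le: "h \<le> T"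
    and u_def: "\<forall>\<tau>. u \<tau> = W + (\<Sum>i<r. integral {0..\<tau> * h} (phi i) *\<^sub>R Ws i)"
    and u'_def: "\<forall>\<tau>. u' \<tau> = (\<Sum>i<r. phi i (\<tau> * h) *\<^sub>R Ws i)"
    and u_init: "u 0 = y0"
    and colloc: "\<forall>\<tau>\<in>{0..1}. G (u \<tau>) *v u' \<tau> + A *v u \<tau> = - Ph phi r h (\<lambda>s. gradV (u s)) \<tau>"
  shows "U (u 1) \<le> U y0"

proof -
  have h0: "0 \<le> h" using h_pos by simp
  have phi_c: "\<forall>i<r. continuous_on {0..T} (phi i)" using phi_cont .
  define w where "w \<tau> = gradV (u \<tau>)" for \<tau>
  obtain D :: "real^'n \<Rightarrow> ((real^'n) \<Rightarrow>\<^sub>L (real^'n))"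
    where D: "\<forall>y. (gradV has_derivative blinfun_apply (D y)) (at y)" using V_C2 by blast
  have gc: "continuous_on UNIV gradV"
    using D has_derivative_continuous by (metis continuous_at_imp_continuous_on)
  have dI: "((\<lambda>\<tau>. integral {0..\<tau> * h} (phi i)) has_vector_derivative (h * phi i (\<tau>*h))) (at \<tau> within {0..1})"
    if i: "i < r" and t: "\<tau> \<in> {0..1}" for i \<tau>
  proof -
    have th: "\<tau>*h \<in> {0..T}" using t h0 h_le mult_right_mono[of \<tau> 1 h] by auto
    have sub: "(\<lambda>\<tau>. \<tau>*h) ` {0..1} \<subseteq> {0..T}"
    proof
      fix x assume "x \<in> (\<lambda>\<tau>. \<tau>*h) ` {0..1::real}"
      then obtain s where s: "s \<in> {0..1}" "x = s*h" by auto
      have "s*h \<le> 1*h" using s h0 by (intro mult_right_mono) auto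
      then show "x \<in> {0..T}" using s h0 h_le by auto
    qed
    have "((\<lambda>\<tau>. \<tau>*h) has_real_derivative 1*h) (at \<tau> within {0..1})"
      by (auto intro!: derivative_eq_intros)
    then have d1: "((\<lambda>\<tau>. \<tau>*h) has_vector_derivative h) (at \<tau> within {0..1})"
      unfolding has_real_derivative_iff_has_vector_derivative by simp
    have pc: "continuous_on {0..T} (phi i)" using phi_c i by blast
    have d2: "((\<lambda>s. integral {0..s} (phi i)) has_vector_derivative phi i (\<tau>*h)) (at (\<tau>*h) within (\<lambda>\<tau>. \<tau>*h) ` {0..1})"
      by (rule has_vector_derivative_within_subset[OF integral_has_vector_derivative[OF pc th] sub])
    from vector_diff_chain_within[OF d1 d2] show ?thesis by (simp add: o_def)
  qed
  have du: "(u has_vector_derivative (h *\<^sub>R u' \<tau>)) (at \<tau> within {0..1})" if t: "\<tau> \<in> {0..1}" for \<tau>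
  proof -
    have "((\<lambda>\<tau>. W + (\<Sum>i<r. integral {0..\<tau> * h} (phi i) *\<^sub>R Ws i)) has_vector_derivative
           (0 + (\<Sum>i<r. (h * phi i (\<tau>*h)) *\<^sub>R Ws i))) (at \<tau> within {0..1})"
    proof (intro has_vector_derivative_add has_vector_derivative_const has_vector_derivative_sum)
      fix i assume "i \<in> {..<r}"
      then have "((\<lambda>\<tau>. integral {0..\<tau> * h} (phi i)) has_field_derivative (h * phi i (\<tau>*h))) (at \<tau> within {0..1})"
        using dI t by (simp add: has_real_derivative_iff_has_vector_derivative)
      from has_vector_derivative_scaleR[OF this has_vector_derivative_const[of "Ws i"]]
      show "((\<lambda>\<tau>. integral {0..\<tau> * h} (phi i) *\<^sub>R Ws i) has_vector_derivative (h * phi i (\<tau>*h)) *\<^sub>R Ws i) (at \<tau> within {0..1})"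
        by simp
    qed
    moreover have "u = (\<lambda>\<tau>. W + (\<Sum>i<r. integral {0..\<tau> * h} (phi i) *\<^sub>R Ws i))"
      using u_def by auto
    moreover have "0 + (\<Sum>i<r. (h * phi i (\<tau>*h)) *\<^sub>R Ws i) = h *\<^sub>R u' \<tau>"
      using u'_def by (simp add: scaleR_sum_right)
    ultimately show ?thesis by simp
  qed
  have uc: "continuous_on {0..1} u"
    using du has_vector_derivative_continuous continuous_on_eq_continuous_within by blast
  have wc: "continuous_on {0..1} w"
    unfolding w_def using continuous_on_compose2[OF gc uc] by simp
  have u'c: "continuous_on {0..1} u'"
  proof -
    have "u' = (\<lambda>t. \<Sum>i<r. phi i (t*h) *\<^sub>R Ws i)" using u'_def by auto
    then show ?thesis using cont_Y[OF phi_c h0 h_le] by simp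
  qed
  obtain Wp where Wp: "is_proj_Yh phi r h w (\<lambda>t. \<Sum>i<r. phi i (t*h) *\<^sub>R Wp i)"
    using proj_exists[OF phi_c h0 h_le wc] by blast
  define p where "p t = (\<Sum>i<r. phi i (t*h) *\<^sub>R Wp i)" for t
  have pproj: "is_proj_Yh phi r h w p" using Wp unfolding p_def .
  have pc: "continuous_on {0..1} p" unfolding p_def by (rule cont_Y[OF phi_c h0 h_le])
  have Pp: "Ph phi r h (\<lambda>s. gradV (u s)) \<tau> = p \<tau>" if "\<tau> \<in> {0..1}" for \<tau>
    using Ph_eq[OF phi_c h0 h_le pproj that] unfolding w_def by simp
  have u'Y: "in_Yh phi r h u'" unfolding in_Yh_def using u'_def by blast
  have orth: "integral {0..1} (\<lambda>\<tau>. u' \<tau> * p \<tau>) = integral {0..1} (\<lambda>\<tau>. u' \<tau> * w \<tau>)"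
    using pproj u'Y unfolding is_proj_Yh_def by blast
  define q1 where "q1 \<tau> = h * ((w \<tau> - p \<tau>) \<bullet> u' \<tau>)" for \<tau>
  define q2 where "q2 \<tau> = - h * (u' \<tau> \<bullet> (G (u \<tau>) *v u' \<tau>))" for \<tau>
  have q1int: "(q1 has_integral 0) {0..1}"
  proof -
    have i1: "(\<lambda>\<tau>. u' \<tau> \<bullet> w \<tau>) integrable_on {0..1}"
      by (intro integrable_continuous_interval continuous_intros u'c wc)
    have i2: "(\<lambda>\<tau>. u' \<tau> \<bullet> p \<tau>) integrable_on {0..1}"
      by (intro integrable_continuous_interval continuous_intros u'c pc)
    have "integral {0..1} (\<lambda>\<tau>. u' \<tau> \<bullet> w \<tau>) = integral {0..1} (\<lambda>\<tau>. u' \<tau> \<bullet> p \<tau>)"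
      using integral_inner_vmult[OF u'c wc] integral_inner_vmult[OF u'c pc] orth by simp
    then have "((\<lambda>\<tau>. u' \<tau> \<bullet> w \<tau> - u' \<tau> \<bullet> p \<tau>) has_integral 0) {0..1}"
      using has_integral_diff[OF integrable_integral[OF i1] integrable_integral[OF i2]] by simp
    then have "((\<lambda>\<tau>. h * (u' \<tau> \<bullet> w \<tau> - u' \<tau> \<bullet> p \<tau>)) has_integral h * 0) {0..1}"
      by (rule has_integral_mult_right)
    moreover have "(\<lambda>\<tau>. h * (u' \<tau> \<bullet> w \<tau> - u' \<tau> \<bullet> p \<tau>)) = q1"
    proof (rule ext)
      fix \<tau> show "h * (u' \<tau> \<bullet> w \<tau> - u' \<tau> \<bullet> p \<tau>) = q1 \<tau>"
        by (simp add: q1_def inner_diff_left inner_commute[of "u' \<tau>" "w \<tau>"] inner_commute[of "u' \<tau>" "p \<tau>"])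
    qed
    ultimately show ?thesis by simp
  qed
  have dU: "(U has_derivative (\<lambda>z. (A *v y + gradV y) \<bullet> z)) (at y)" for y
  proof -
    have Ueq: "U = (\<lambda>y. 1/2 * (y \<bullet> (A *v y)) + V y)" using U_def by auto
    have dA: "((\<lambda>y. A *v y) has_derivative (\<lambda>z. A *v z)) (at y)"
      by (rule bounded_linear.has_derivative[OF matrix_vector_mul_bounded_linear has_derivative_ident])
    have dQ: "((\<lambda>y. y \<bullet> (A *v y)) has_derivative (\<lambda>z. y \<bullet> (A *v z) + z \<bullet> (A *v y))) (at y)"
      using has_derivative_inner[OF has_derivative_ident dA] by simp
    have dQ2: "((\<lambda>y. 1/2 * (y \<bullet> (A *v y))) has_derivative (\<lambda>z. 1/2 * (y \<bullet> (A *v z) + z \<bullet> (A *v y)))) (at y)"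
      by (rule bounded_linear.has_derivative[OF bounded_linear_mult_right dQ])
    have "((\<lambda>y. 1/2 * (y \<bullet> (A *v y)) + V y) has_derivative
       (\<lambda>z. 1/2 * (y \<bullet> (A *v z) + z \<bullet> (A *v y)) + gradV y \<bullet> z)) (at y)"
      using has_derivative_add[OF dQ2 V_grad[rule_format, of y]] .
    moreover have "(\<lambda>z. 1/2 * (y \<bullet> (A *v z) + z \<bullet> (A *v y)) + gradV y \<bullet> z) = (\<lambda>z. (A *v y + gradV y) \<bullet> z)"
      using sym_inner[OF A_sym] by (auto simp: inner_add_left inner_add_right inner_commute)
    ultimately show ?thesis using Ueq by simp
  qed
  define f' where "f' \<tau> = (A *v u \<tau> + gradV (u \<tau>)) \<bullet> (h *\<^sub>R u' \<tau>)" for \<tau>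
  have df: "((\<lambda>\<tau>. U (u \<tau>)) has_vector_derivative f' \<tau>) (at \<tau> within {0..1})" if t: "\<tau> \<in> {0..1}" for \<tau>
  proof -
    have "((\<lambda>\<tau>. U (u \<tau>)) has_derivative (\<lambda>x. (A *v u \<tau> + gradV (u \<tau>)) \<bullet> (x *\<^sub>R (h *\<^sub>R u' \<tau>)))) (at \<tau> within {0..1})"
      using has_derivative_compose[OF du[OF t, unfolded has_vector_derivative_def] dU] .
    then show ?thesis unfolding has_vector_derivative_def f'_def
      by (rule has_derivative_eq_rhs) (auto simp: inner_scaleR_right)
  qed
  have fint: "(f' has_integral (U (u 1) - U (u 0))) {0..1}"
    using fundamental_theorem_of_calculus[of 0 1 "\<lambda>\<tau>. U (u \<tau>)" f'] df by simp
  have fq: "f' \<tau> = q1 \<tau> + q2 \<tau>" if t: "\<tau> \<in> {0..1}" for \<tau>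
  proof -
    have c: "A *v u \<tau> = - p \<tau> - G (u \<tau>) *v u' \<tau>"
      using colloc t Pp[OF t] by (metis add.commute eq_diff_eq diff_minus_eq_add minus_diff_eq uminus_add_conv_diff)
    show ?thesis
      unfolding f'_def q1_def q2_def w_def c
      by (simp add: inner_diff_left inner_add_left inner_commute algebra_simps)
  qed
  have q2int: "(q2 has_integral (U (u 1) - U (u 0))) {0..1}"
  proof -
    have "((\<lambda>\<tau>. q1 \<tau> + q2 \<tau>) has_integral (U (u 1) - U (u 0))) {0..1}"
      using has_integral_eq[of "{0..1}" f' "\<lambda>\<tau>. q1 \<tau> + q2 \<tau>"] fq fint by blast
    from has_integral_diff[OF this q1int] show ?thesis by simp
  qed
  have q2le: "q2 \<tau> \<le> 0" for \<tau>
  proof -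
    have "0 \<le> u' \<tau> \<bullet> (G (u \<tau>) *v u' \<tau>)"
    proof (cases "u' \<tau> = 0")
      case True then show ?thesis by simp
    next
      case False
      then show ?thesis using Gamma_pd G_bound by (meson less_le_trans less_imp_le)
    qed
    then show ?thesis unfolding q2_def using h0 by simp
  qed
  have "U (u 1) - U (u 0) \<le> 0"
    using has_integral_le[OF q2int has_integral_0[of "{0..1::real}"]] q2le by simp
  then show ?thesis using u_init by simp
qed

end
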